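(* Let $1\le i_1<\cdots<i_k\le n+1$ and $1\le j_1<\cdots<j_k\le n+1$ with $i_r\le j_r$ for all $r$, and let $\varphi_{\underline i\underline j}\in\mathbb C[N]$ be the minor of the matrix $T=(t_{ab})$ on rows $\underline i=(i_1,\ldots,i_k)$ and columns $\underline j=(j_1,\ldots,j_k)$. Put $\lambda=(j_k,j_{k-1}+1,\ldots,j_1+k-1)$, $\mu=(i_k,i_{k-1}+1,\ldots,i_1+k-1)$ and $\lambda/\mu=\{(a,b)\mid 1\le b\le k,\ \mu_b<a\le\lambda_b\}$. Then $$\pi^*\alpha(\varphi_{\underline i\underline j})=\sum_y w[y],$$ where $y$ runs over the standard Young tableaux of shape $\lambda/\mu$, i.e. total orderings $c_1<\cdots<c_t$ of the cells of $\lambda/\mu$ increasing along rows and columns (so $(a,b)<(a+1,b)$ and $(a,b)<(a,b+1)$ whenever both cells lie in $\lambda/\mu$), and for $c_r=(a_r,b_r)$ we set $w[y]=w[a_t-b_t,\ldots,a_1-b_1]$.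
   Context: Type $\mathbb A_n$: $Q_n$ is the quiver with vertices $1,\ldots,n$ and arrows $\alpha_i:i+1\to i$; $\Lambda$ its preprojective algebra; ${\mathcal M}$ Lusztig's algebra of invariant constructible functions on the nilpotent varieties $\Lambda_{\mathbf V}$, generated by characteristic functions $\mathbf 1_{Z[i]}$ of one-point varieties; ${\mathcal M}^*$ its graded dual with product dual to $\Delta(f)(x',x'')=f(x'\oplus x'')$. $N$ is the group of unitriangular $(n+1)\times(n+1)$ matrices, $\mathbb C[N]=\mathbb C[t_{ab}\mid 1\le a<b\le n+1]$ with $t_{ab}$ the entry functions, $T$ the unitriangular matrix with entries $t_{ab}$ above the diagonal. For $1\le i\le j\le n$, $x[i,j]$ is the indecomposable representation of $Q_n$ with socle $S_i$ and top $S_j$, viewed as a $\Lambda$-module (maps for the arrows $\alpha_i^*$ being zero), and $\delta_x(f)=f(x)$. $\alpha:\mathbb C[N]\to{\mathcal M}^*$ is the algebra isomorphism (induced by $\mathbb C[N]\cong U(\mathfrak n)^*$ and Lusztig's isomorphism $U(\mathfrak n)\cong{\mathcal M}$) with $\alpha(t_{i,j+1})=\delta_{x[i,j]}$. $F=\mathbb C\langle 1,\ldots,n\rangle$, $F^*$ its graded dual with basis $w[{\mathbf i}]$ dual to words, and $\pi^*:{\mathcal M}^*\to F^*$, $\pi^*(\sigma)=\sum_{\mathbf i}\sigma(\mathbf 1_{Z[i_1]}*\cdots*\mathbf 1_{Z[i_m]})w[{\mathbf i}]$. *)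

theory Defs
  imports "HOL-Analysis.Derivative" "Jordan_Normal_Form.Determinant" "HOL-Library.Function_Algebras"
begin

text \<open>Matrices of size (n+1)x(n+1), 0-indexed internally: the paper's entry t_ab
  (1-based) is the entry (a-1, b-1).\<close>

text \<open>Chevalley generator e_a of n, the matrix unit E_{a,a+1} (1-based).\<close>
definition elemmat :: "nat \<Rightarrow> nat \<Rightarrow> complex mat" where
  "elemmat n a = mat (n+1) (n+1) (\<lambda>(p,q). if p = a - 1 \<and> q = a then 1 else 0)"

text \<open>exp(z e_a) = 1 + z e_a (square-zero).\<close>
definition expE :: "nat \<Rightarrow> nat \<Rightarrow> complex \<Rightarrow> complex mat" where
  "expE n a z = 1\<^sub>m (n+1) + z \<cdot>\<^sub>m elemmat n a"

text \<open>For a word ws = [a_1,...,a_m] (stored at positions 0..m-1) and parameters s: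
  exp(s_m e_{a_m}) ... exp(s_1 e_{a_1}).\<close>
definition wordmat :: "nat \<Rightarrow> nat list \<Rightarrow> (nat \<Rightarrow> complex) \<Rightarrow> complex mat" where
  "wordmat n ws s = fold (\<lambda>k M. expE n (ws ! k) (s k) * M) [0..<length ws] (1\<^sub>m (n+1))"

fun mixed_deriv :: "nat \<Rightarrow> ((nat \<Rightarrow> complex) \<Rightarrow> complex) \<Rightarrow> complex" where
  "mixed_deriv 0 g = g (\<lambda>_. 0)"
| "mixed_deriv (Suc m) g = deriv (\<lambda>z. mixed_deriv m (\<lambda>s. g (s(m := z)))) 0"

text \<open>pi^* alpha (f), as an element of F^* (function on words over {1..n}):
  its value on the word (i_1..i_m) is the pairing of f in C[N] = U(n)^* with
  e_{i_1} ... e_{i_m} (Lusztig's isomorphism sends e_i to 1_{Z[i]}).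
  The pairing convention is the one normalised by alpha(t_{i,j+1}) = delta_{x[i,j]}.\<close>
definition pistar_alpha :: "nat \<Rightarrow> (complex mat \<Rightarrow> complex) \<Rightarrow> nat list \<Rightarrow> complex" where
  "pistar_alpha n f ws =
     (if set ws \<subseteq> {1..n} then mixed_deriv (length ws) (\<lambda>s. f (wordmat n ws s)) else 0)"

definition minor :: "nat list \<Rightarrow> nat list \<Rightarrow> complex mat \<Rightarrow> complex" where
  "minor I J g = det (mat (length I) (length I) (\<lambda>(r,c). g $$ (I ! r - 1, J ! c - 1)))"

definition wdual :: "nat list \<Rightarrow> nat list \<Rightarrow> complex" where
  "wdual v = (\<lambda>ws. if ws = v then 1 else 0)"

text \<open>lambda_b = j_{k+1-b} + b - 1, mu_b = i_{k+1-b} + b - 1, and the skew diagram lambda/mu.\<close>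
definition skew_cells :: "nat list \<Rightarrow> nat list \<Rightarrow> (nat \<times> nat) set" where
  "skew_cells I J = {(a,b). 1 \<le> b \<and> b \<le> length I \<and>
      I ! (length I - b) + b - 1 < a \<and> a \<le> J ! (length J - b) + b - 1}"

definition std_tableaux :: "(nat \<times> nat) set \<Rightarrow> (nat \<times> nat) list set" where
  "std_tableaux C = {y. distinct y \<and> set y = C \<and>
     (\<forall>a b p q. p < length y \<and> q < length y \<and> y ! p = (a,b) \<and> y ! q = (a+1,b) \<longrightarrow> p < q) \<and>
     (\<forall>a b p q. p < length y \<and> q < length y \<and> y ! p = (a,b) \<and> y ! q = (a,b+1) \<longrightarrow> p < q)}"

definition tableau_word :: "(nat \<times> nat) list \<Rightarrow> nat list" where
  "tableau_word y = rev (map (\<lambda>(a,b). a - b) y)"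

end

theory Submission
  imports Defs
begin

inductive_set polyf :: "((nat \<Rightarrow> complex) \<Rightarrow> complex) set" where
  pc: "(\<lambda>s. c) \<in> polyf"
| pv: "(\<lambda>s. s k) \<in> polyf"
| pa: "f \<in> polyf \<Longrightarrow> g \<in> polyf \<Longrightarrow> (\<lambda>s. f s + g s) \<in> polyf"
| pm: "f \<in> polyf \<Longrightarrow> g \<in> polyf \<Longrightarrow> (\<lambda>s. f s * g s) \<in> polyf"

lemma polyf_subst:
  assumes "f \<in> polyf" and "\<And>k. (\<lambda>s. h s k) \<in> polyf"
  shows "(\<lambda>s. f (h s)) \<in> polyf"
  using assms(1) by induction (auto intro: polyf.intros assms(2))

lemma polyf_sum:
  assumes "finite A" "\<And>i. i \<in> A \<Longrightarrow> f i \<in> polyf"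
  shows "(\<lambda>s. \<Sum>i\<in>A. f i s) \<in> polyf"
  using assms
proof (induction A rule: finite_induct)
  case empty then show ?case using pc[of 0] by simp
next
  case (insert x F) then show ?case by (simp add: pa)
qed

lemma polyf_prod:
  assumes "finite A" "\<And>i. i \<in> A \<Longrightarrow> f i \<in> polyf"
  shows "(\<lambda>s. \<Prod>i\<in>A. f i s) \<in> polyf"
  using assms
proof (induction A rule: finite_induct)
  case empty then show ?case using pc[of 1] by simp
next
  case (insert x F) then show ?case by (simp add: pm)
qed

lemma polyf_upd: "(\<lambda>s. (s(j := z)) k) \<in> polyf"
  by (cases "k = j") (auto intro: polyf.intros)

lemma polyf_deriv:
  assumes "f \<in> polyf"
  shows "\<exists>f'\<in>polyf. \<forall>s z. ((\<lambda>z. f (s(j:=z))) has_field_derivative f' (s(j:=z))) (at z)"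
  using assms
proof induction
  case (pc c)
  show ?case by (rule bexI[of _ "\<lambda>s. 0"]) (auto intro: polyf.intros)
next
  case (pv k)
  show ?case
  proof (rule bexI[of _ "\<lambda>s. if k = j then 1 else 0"])
    show "\<forall>s z. ((\<lambda>z. (s(j := z)) k) has_field_derivative (if k = j then 1 else 0)) (at z)"
      by (cases "k = j") auto
  qed (auto intro: polyf.intros)
next
  case (pa f g)
  then obtain f' g' where "f' \<in> polyf" "g' \<in> polyf"
    and "\<forall>s z. ((\<lambda>z. f (s(j:=z))) has_field_derivative f' (s(j:=z))) (at z)"
    and d: "\<forall>s z. ((\<lambda>z. f (s(j:=z))) has_field_derivative f' (s(j:=z))) (at z)"
      "\<forall>s z. ((\<lambda>z. g (s(j:=z))) has_field_derivative g' (s(j:=z))) (at z)" by blast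
  show ?case
  proof (intro bexI[of _ "\<lambda>s. f' s + g' s"] allI)
    fix s z
    show "((\<lambda>z. f (s(j:=z)) + g (s(j:=z))) has_field_derivative f' (s(j:=z)) + g' (s(j:=z))) (at z)"
      using DERIV_add[OF d(1)[rule_format] d(2)[rule_format]] .
  qed (auto intro: polyf.intros \<open>f' \<in> polyf\<close> \<open>g' \<in> polyf\<close>)
next
  case (pm f g)
  then obtain f' g' where "f' \<in> polyf" "g' \<in> polyf"
    and "\<forall>s z. ((\<lambda>z. f (s(j:=z))) has_field_derivative f' (s(j:=z))) (at z)"
    and d: "\<forall>s z. ((\<lambda>z. f (s(j:=z))) has_field_derivative f' (s(j:=z))) (at z)"
      "\<forall>s z. ((\<lambda>z. g (s(j:=z))) has_field_derivative g' (s(j:=z))) (at z)" by blast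
  show ?case
  proof (intro bexI[of _ "\<lambda>s. f' s * g s + g' s * f s"] allI)
    fix s z
    show "((\<lambda>z. f (s(j:=z)) * g (s(j:=z))) has_field_derivative f' (s(j:=z)) * g (s(j:=z)) + g' (s(j:=z)) * f (s(j:=z))) (at z)"
      using DERIV_mult[OF d(1)[rule_format] d(2)[rule_format]] .
  next
    show "(\<lambda>s. f' s * g s + g' s * f s) \<in> polyf"
      by (rule polyf.pa; rule polyf.pm) (use \<open>f' \<in> polyf\<close> \<open>g' \<in> polyf\<close> pm.hyps in auto)
  qed
qed

lemma mixed_deriv_cong:
  assumes "\<And>s. (\<forall>k\<ge>m. s k = 0) \<Longrightarrow> g s = h s"
  shows "mixed_deriv m g = mixed_deriv m h"
  using assms
proof (induction m arbitrary: g h)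
  case 0 then show ?case using 0[of "\<lambda>_. 0"] by simp
next
  case (Suc m)
  have "(\<lambda>z. mixed_deriv m (\<lambda>s. g (s(m := z)))) = (\<lambda>z. mixed_deriv m (\<lambda>s. h (s(m := z))))"
  proof
    fix z
    show "mixed_deriv m (\<lambda>s. g (s(m := z))) = mixed_deriv m (\<lambda>s. h (s(m := z)))"
      by (rule Suc.IH) (rule Suc.prems, auto)
  qed
  then show ?case by simp
qed

definition mrg :: "nat \<Rightarrow> (nat \<Rightarrow> complex) \<Rightarrow> (nat \<Rightarrow> complex) \<Rightarrow> nat \<Rightarrow> complex" where
  "mrg m s s' = (\<lambda>k. if k < m then s k else s' k)"

lemma polyf_mrg: "(\<lambda>s'. mrg m s s' k) \<in> polyf"
  unfolding mrg_def by (cases "k < m") (auto intro: polyf.intros)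

lemma mixed_deriv_polyf:
  assumes "f \<in> polyf"
  shows "(\<lambda>s'. mixed_deriv m (\<lambda>s. f (mrg m s s'))) \<in> polyf"
  using assms
proof (induction m arbitrary: f)
  case 0
  then show ?case by (simp add: mrg_def)
next
  case (Suc m)
  define Q where "Q = (\<lambda>s'. mixed_deriv m (\<lambda>s. f (mrg m s s')))"
  have Q: "Q \<in> polyf" unfolding Q_def by (rule Suc.IH[OF Suc.prems])
  obtain Q' where Q': "Q' \<in> polyf" "\<forall>s z. ((\<lambda>z. Q (s(m:=z))) has_field_derivative Q' (s(m:=z))) (at z)"
    using polyf_deriv[OF Q] by blast
  have eq: "mrg (Suc m) (s(m := z)) s' = mrg m s (s'(m := z))" for s s' z
    unfolding mrg_def by auto
  have "(\<lambda>s'. mixed_deriv (Suc m) (\<lambda>s. f (mrg (Suc m) s s'))) = (\<lambda>s'. Q' (s'(m:=0)))"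
  proof
    fix s'
    have "mixed_deriv (Suc m) (\<lambda>s. f (mrg (Suc m) s s')) = deriv (\<lambda>z. Q (s'(m:=z))) 0"
      by (simp add: eq Q_def)
    also have "\<dots> = Q' (s'(m:=0))"
      using Q'(2) by (intro DERIV_imp_deriv) blast
    finally show "mixed_deriv (Suc m) (\<lambda>s. f (mrg (Suc m) s s')) = Q' (s'(m:=0))" .
  qed
  moreover have "(\<lambda>s'. Q' (s'(m:=0))) \<in> polyf"
    by (rule polyf_subst[OF Q'(1) polyf_upd])
  ultimately show ?case by simp
qed

lemma mixed_deriv_slice:
  assumes "f \<in> polyf"
  shows "\<exists>D. \<forall>z. ((\<lambda>z. mixed_deriv m (\<lambda>s. f (s(m:=z)))) has_field_derivative D z) (at z)"
proof -
  define Q where "Q = (\<lambda>s'. mixed_deriv m (\<lambda>s. f (mrg m s s')))"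
  have Q: "Q \<in> polyf" unfolding Q_def by (rule mixed_deriv_polyf[OF assms])
  obtain Q' where Q': "\<forall>s z. ((\<lambda>z. Q (s(m:=z))) has_field_derivative Q' (s(m:=z))) (at z)"
    using polyf_deriv[OF Q] by blast
  have "mixed_deriv m (\<lambda>s. f (s(m:=z))) = Q ((\<lambda>_. 0)(m:=z))" for z
    unfolding Q_def
    by (rule mixed_deriv_cong) (auto simp: mrg_def intro!: arg_cong[where f=f])
  then show ?thesis using Q' by (intro exI[of _ "\<lambda>z. Q' ((\<lambda>_. 0)(m:=z))"]) simp
qed

lemma mixed_deriv_lin:
  assumes "f \<in> polyf" "g \<in> polyf"
  shows "mixed_deriv m (\<lambda>s. f s + c * g s) = mixed_deriv m f + c * mixed_deriv m g"
  using assms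
proof (induction m arbitrary: f g)
  case 0 then show ?case by simp
next
  case (Suc m)
  have fs: "(\<lambda>s. f (s(m:=z))) \<in> polyf" "(\<lambda>s. g (s(m:=z))) \<in> polyf" for z
    using Suc.prems by (auto intro: polyf_subst polyf_upd)
  obtain Df where Df: "\<forall>z. ((\<lambda>z. mixed_deriv m (\<lambda>s. f (s(m:=z)))) has_field_derivative Df z) (at z)"
    using mixed_deriv_slice[OF Suc.prems(1)] by blast
  obtain Dg where Dg: "\<forall>z. ((\<lambda>z. mixed_deriv m (\<lambda>s. g (s(m:=z)))) has_field_derivative Dg z) (at z)"
    using mixed_deriv_slice[OF Suc.prems(2)] by blast
  have "mixed_deriv (Suc m) (\<lambda>s. f s + c * g s) =
    deriv (\<lambda>z. mixed_deriv m (\<lambda>s. f (s(m:=z))) + c * mixed_deriv m (\<lambda>s. g (s(m:=z)))) 0"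
  proof -
    have "(\<lambda>z. mixed_deriv m (\<lambda>s. f (s(m:=z)) + c * g (s(m:=z)))) =
      (\<lambda>z. mixed_deriv m (\<lambda>s. f (s(m:=z))) + c * mixed_deriv m (\<lambda>s. g (s(m:=z))))"
      by (rule ext, rule Suc.IH[OF fs])
    then show ?thesis by simp
  qed
  also have "\<dots> = Df 0 + c * Dg 0"
    using Df Dg by (intro DERIV_imp_deriv) (auto intro!: derivative_eq_intros)
  also have "\<dots> = mixed_deriv (Suc m) f + c * mixed_deriv (Suc m) g"
    using Df Dg by (simp add: DERIV_imp_deriv[OF Df[rule_format]] DERIV_imp_deriv[OF Dg[rule_format]])
  finally show ?case .
qed

lemma wordmat_snoc:
  "wordmat n (ws @ [a]) s = expE n a (s (length ws)) * wordmat n ws s"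
proof -
  have "fold (\<lambda>k M. expE n ((ws @ [a]) ! k) (s k) * M) [0..<length ws] (1\<^sub>m (n+1))
      = fold (\<lambda>k M. expE n (ws ! k) (s k) * M) [0..<length ws] (1\<^sub>m (n+1))"
    by (rule fold_cong) (auto simp: nth_append)
  then show ?thesis unfolding wordmat_def by simp
qed

lemma wordmat_Nil: "wordmat n [] s = 1\<^sub>m (n+1)"
  unfolding wordmat_def by simp

lemma expE_carrier: "expE n a z \<in> carrier_mat (n+1) (n+1)"
  unfolding expE_def elemmat_def by auto

lemma wordmat_carrier: "wordmat n ws s \<in> carrier_mat (n+1) (n+1)"
proof (induction ws rule: rev_induct)
  case Nil then show ?case by (simp add: wordmat_Nil)
next
  case (snoc x xs) then show ?case using mult_carrier_mat[OF expE_carrier snoc.IH] by (simp only: wordmat_snoc)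
qed

lemma wordmat_upd: "length ws \<le> j \<Longrightarrow> wordmat n ws (s(j := z)) = wordmat n ws s"
  by (induction ws rule: rev_induct) (auto simp: wordmat_snoc wordmat_Nil)

lemma mult_entry:
  assumes "A \<in> carrier_mat N N" "B \<in> carrier_mat N N" "p < N" "q < N"
  shows "(A * B) $$ (p,q) = (\<Sum>t\<in>{0..<N}. A $$ (p,t) * B $$ (t,q))"
  using assms by (auto simp: scalar_prod_def intro: sum.cong)

lemma expE_entry:
  assumes "p < n+1" "t < n+1"
  shows "expE n a z $$ (p,t) = (if p = t then 1 else 0) + z * (if p = a - 1 \<and> t = a then 1 else 0)"
  using assms unfolding expE_def elemmat_def by auto

lemma expE_mult:
  assumes M: "M \<in> carrier_mat (n+1) (n+1)" and pq: "p < n+1" "q < n+1" and a: "1 \<le> a" "a \<le> n"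
  shows "(expE n a z * M) $$ (p,q) = M $$ (p,q) + (if p = a - 1 then z * M $$ (a,q) else 0)"
proof -
  have "(expE n a z * M) $$ (p,q) = (\<Sum>t\<in>{0..<n+1}. ((if p = t then 1 else 0) + z * (if p = a - 1 \<and> t = a then 1 else 0)) * M $$ (t,q))"
    using mult_entry[OF expE_carrier M pq] pq by (simp add: expE_entry)
  also have "\<dots> = (\<Sum>t\<in>{0..<n+1}. (if p = t then M $$ (t,q) else 0)) + (\<Sum>t\<in>{0..<n+1}. (if p = a - 1 \<and> t = a then z * M $$ (t,q) else 0))"
    by (subst sum.distrib[symmetric]) (rule sum.cong, auto simp: distrib_right)
  also have "\<dots> = M $$ (p,q) + (if p = a - 1 then z * M $$ (a,q) else 0)"
    using pq a by (auto simp: sum.delta)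
  finally show ?thesis .
qed

lemma wordmat_polyf:
  assumes "p < n+1" "q < n+1"
  shows "(\<lambda>s. wordmat n ws s $$ (p,q)) \<in> polyf"
  using assms
proof (induction ws arbitrary: p q rule: rev_induct)
  case Nil
  then show ?case by (simp add: wordmat_Nil polyf.pc)
next
  case (snoc a ws)
  have "(\<lambda>s. wordmat n (ws @ [a]) s $$ (p,q)) = (\<lambda>s. \<Sum>t\<in>{0..<n+1}.
      ((if p = t then 1 else 0) + s (length ws) * (if p = a - 1 \<and> t = a then 1 else 0)) * wordmat n ws s $$ (t,q))"
    using snoc.prems
    by (auto simp: wordmat_snoc mult_entry[OF expE_carrier wordmat_carrier] expE_entry intro!: sum.cong)
  also have "\<dots> \<in> polyf"
    using snoc by (intro polyf_sum) (auto intro!: polyf.intros)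
  finally show ?case .
qed

lemma det_polyf:
  assumes "\<And>s. A s \<in> carrier_mat k k" and "\<And>i j. i < k \<Longrightarrow> j < k \<Longrightarrow> (\<lambda>s. A s $$ (i,j)) \<in> polyf"
  shows "(\<lambda>s. det (A s)) \<in> polyf"
proof -
  have "(\<lambda>s. det (A s)) = (\<lambda>s. \<Sum>p \<in> {p. p permutes {0 ..< k}}. signof p * (\<Prod>i\<in>{0 ..< k}. A s $$ (i, p i)))"
    using det_def'[OF assms(1)] by auto
  also have "\<dots> \<in> polyf"
  proof (rule polyf_sum)
    show "finite {p. p permutes {0..<k}}" by (rule finite_permutations) simp
  next
    fix p assume p: "p \<in> {p. p permutes {0..<k}}"
    show "(\<lambda>s. signof p * (\<Prod>i\<in>{0 ..< k}. A s $$ (i, p i))) \<in> polyf"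
    proof (rule polyf.pm[OF polyf.pc], rule polyf_prod)
      fix i assume "i \<in> {0..<k}"
      then show "(\<lambda>s. A s $$ (i, p i)) \<in> polyf"
        using p by (intro assms(2)) (auto simp: permutes_in_image)
    qed simp
  qed
  finally show ?thesis .
qed

lemma minor_polyf:
  assumes "\<forall>x\<in>set I. 1 \<le> x \<and> x \<le> n+1" "\<forall>x\<in>set J. 1 \<le> x \<and> x \<le> n+1" "length J = length I"
  shows "(\<lambda>s. minor I J (wordmat n ws s)) \<in> polyf"
  unfolding minor_def
proof (rule det_polyf)
  fix i j assume "i < length I" "j < length I"
  then have "I ! i \<in> set I" "J ! j \<in> set J" using assms by auto
  then have "I ! i - 1 < n+1" "J ! j - 1 < n+1" using assms by fastforce+
  then show "(\<lambda>s. mat (length I) (length I) (\<lambda>(r, c). wordmat n ws s $$ (I ! r - 1, J ! c - 1)) $$ (i, j)) \<in> polyf"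
    using \<open>i < length I\<close> \<open>j < length I\<close> by (simp add: wordmat_polyf)
qed auto

lemma mat_delete_rows_eq:
  assumes "A \<in> carrier_mat k k" "B \<in> carrier_mat k k" "i < k"
    and "\<And>r c. r < k \<Longrightarrow> c < k \<Longrightarrow> r \<noteq> i \<Longrightarrow> A $$ (r,c) = B $$ (r,c)"
  shows "mat_delete A i j = mat_delete B i j"
  unfolding mat_delete_def using assms by (intro cong_mat) auto

lemma minor_expE:
  assumes M: "M \<in> carrier_mat (n+1) (n+1)" and a: "1 \<le> a" "a \<le> n" and len: "length J = length I"
    and I: "\<forall>x\<in>set I. 1 \<le> x \<and> x \<le> n+1" "distinct I" and J: "\<forall>x\<in>set J. 1 \<le> x \<and> x \<le> n+1"
  shows "minor I J (expE n a z * M) = minor I J M + z * (if a \<in> set I \<and> Suc a \<notin> set I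
     then minor (map (\<lambda>x. if x = a then Suc a else x) I) J M else 0)"
proof -
  define k where "k = length I"
  define I' where "I' = map (\<lambda>x. if x = a then Suc a else x) I"
  define S0 where "S0 = mat k k (\<lambda>(r,c). M $$ (I!r - 1, J!c - 1))"
  define S where "S = mat k k (\<lambda>(r,c). (expE n a z * M) $$ (I!r - 1, J!c - 1))"
  define S1 where "S1 = mat k k (\<lambda>(r,c). M $$ (I'!r - 1, J!c - 1))"
  have rng: "1 \<le> I!r \<and> I!r \<le> n+1" if "r < k" for r using I that unfolding k_def by auto
  have rngJ: "1 \<le> J!r \<and> J!r \<le> n+1" if "r < k" for r using J that len unfolding k_def by auto
  have S_ent: "S $$ (r,c) = S0 $$ (r,c) + (if I!r = a then z * M $$ (a, J!c - 1) else 0)"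
    if "r < k" "c < k" for r c
  proof -
    have "I!r - 1 < n+1" "J!c - 1 < n+1" using rng[OF that(1)] rngJ[OF that(2)] by auto
    moreover have "(I!r - 1 = a - 1) = (I!r = a)" using rng[OF that(1)] a by auto
    ultimately show ?thesis unfolding S_def S0_def using that expE_mult[OF M _ _ a] by simp
  qed
  have S1_ent: "S1 $$ (r,c) = (if I!r = a then M $$ (a, J!c - 1) else S0 $$ (r,c))"
    if "r < k" "c < k" for r c
    using that unfolding S1_def S0_def I'_def k_def by auto
  have car: "S \<in> carrier_mat k k" "S0 \<in> carrier_mat k k" "S1 \<in> carrier_mat k k"
    unfolding S_def S0_def S1_def by auto
  have mS: "minor I J (expE n a z * M) = det S" "minor I J M = det S0" "minor I' J M = det S1"
    unfolding minor_def S_def S0_def S1_def k_def I'_def by auto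
  show ?thesis
  proof (cases "a \<in> set I")
    case False
    then have "S = S0" using car S_ent by (intro eq_matI) (auto simp: k_def)
    then show ?thesis using mS False by simp
  next
    case True
    then obtain r0 where r0: "r0 < k" "I!r0 = a" unfolding k_def by (auto simp: in_set_conv_nth)
    have other: "I!r \<noteq> a" if "r < k" "r \<noteq> r0" for r
      using I(2) r0 that unfolding k_def by (auto simp: nth_eq_iff_index_eq)
    show ?thesis
    proof (cases "Suc a \<in> set I")
      case True
      then obtain r1 where r1: "r1 < k" "I!r1 = Suc a" unfolding k_def by (auto simp: in_set_conv_nth)
      have "r0 \<noteq> r1" using r0 r1 by auto
      have "S = addrow z r0 r1 S0"
      proof (rule eq_matI)
        fix i j assume "i < dim_row (addrow z r0 r1 S0)" "j < dim_col (addrow z r0 r1 S0)"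
        then have ij: "i < k" "j < k" using car by auto
        show "S $$ (i, j) = addrow z r0 r1 S0 $$ (i, j)"
          using ij car r0 r1 other[OF ij(1)] by (auto simp: S_ent S0_def)
      qed (use car in auto)
      then have "det S = det S0" using det_addrow[OF r1(1) \<open>r0 \<noteq> r1\<close> car(2)] by simp
      then show ?thesis using mS True by simp
    next
      case False
      have cof: "cofactor S r0 j = cofactor S0 r0 j" "cofactor S1 r0 j = cofactor S0 r0 j" for j
        unfolding cofactor_def
        by (subst mat_delete_rows_eq[OF car(1) car(2) r0(1)], simp add: S_ent other,
            rule refl, subst mat_delete_rows_eq[OF car(3) car(2) r0(1)], simp add: S1_ent other, rule refl)+
      have "det S = (\<Sum>j<k. S $$ (r0,j) * cofactor S r0 j)"
        by (rule laplace_expansion_row[OF car(1) r0(1)])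
      also have "\<dots> = (\<Sum>j<k. S0 $$ (r0,j) * cofactor S0 r0 j) + z * (\<Sum>j<k. S1 $$ (r0,j) * cofactor S1 r0 j)"
        by (simp add: sum.distrib sum_distrib_left S_ent S1_ent r0 cof algebra_simps)
      also have "\<dots> = det S0 + z * det S1"
        by (simp add: laplace_expansion_row[OF car(2) r0(1)] laplace_expansion_row[OF car(3) r0(1)])
      finally show ?thesis using mS \<open>a \<in> set I\<close> False unfolding I'_def by simp
    qed
  qed
qed

lemma minor_one:
  assumes len: "length J = length I"
    and I: "\<forall>x\<in>set I. 1 \<le> x \<and> x \<le> n+1" "sorted_wrt (<) I"
    and J: "\<forall>x\<in>set J. 1 \<le> x \<and> x \<le> n+1" "sorted_wrt (<) J"
  shows "minor I J (1\<^sub>m (n+1)) = (if I = J then 1 else 0)"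
proof -
  define k where "k = length I"
  have dI: "distinct I" "sorted I" and dJ: "distinct J" "sorted J" using I J by (auto simp: strict_sorted_iff)
  have rng: "1 \<le> I!r \<and> I!r \<le> n+1" if "r < k" for r using I that unfolding k_def by auto
  have rngJ: "1 \<le> J!r \<and> J!r \<le> n+1" if "r < k" for r using J that len unfolding k_def by auto
  define S where "S = mat k k (\<lambda>(r,c). (1\<^sub>m (n+1) :: complex mat) $$ (I!r - 1, J!c - 1))"
  have ent: "S $$ (r,c) = (if I!r = J!c then 1 else 0)" if "r < k" "c < k" for r c
  proof -
    have "I!r - 1 < n+1" "J!c - 1 < n+1" using rng[OF that(1)] rngJ[OF that(2)] by auto
    moreover have "(I!r - 1 = J!c - 1) = (I!r = J!c)" using rng[OF that(1)] rngJ[OF that(2)] by auto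
    ultimately show ?thesis unfolding S_def using that by simp
  qed
  have mS: "minor I J (1\<^sub>m (n+1)) = det S" unfolding minor_def S_def k_def by simp
  have car: "S \<in> carrier_mat k k" unfolding S_def by simp
  show ?thesis
  proof (cases "I = J")
    case True
    have "S = 1\<^sub>m k"
      by (rule eq_matI) (use True dI car in \<open>auto simp: ent nth_eq_iff_index_eq k_def\<close>)
    then show ?thesis using mS True by simp
  next
    case False
    have "\<not> set I \<subseteq> set J"
    proof
      assume sub: "set I \<subseteq> set J"
      have "card (set I) = card (set J)" using dI dJ len by (simp add: distinct_card)
      then have "set I = set J" using sub by (simp add: card_subset_eq)
      then show False using False dI dJ sorted_distinct_set_unique by blast
    qed
    then obtain x where x: "x \<in> set I" "x \<notin> set J" by blast
    then obtain r0 where "r0 < k" "I!r0 = x" unfolding k_def by (auto simp: in_set_conv_nth)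
    then have r0: "r0 < k" "I!r0 \<notin> set J" using x by auto
    have "det S = (\<Sum>j<k. S $$ (r0,j) * cofactor S r0 j)"
      by (rule laplace_expansion_row[OF car r0(1)])
    also have "\<dots> = 0"
      using r0 len by (intro sum.neutral) (auto simp: ent k_def)
    finally show ?thesis using mS False by simp
  qed
qed

definition upI :: "nat \<Rightarrow> nat list \<Rightarrow> nat list" where
  "upI a I = map (\<lambda>x. if x = a then Suc a else x) I"

lemma pistar_Nil:
  assumes "length J = length I"
    "\<forall>x\<in>set I. 1 \<le> x \<and> x \<le> n+1" "sorted_wrt (<) I"
    "\<forall>x\<in>set J. 1 \<le> x \<and> x \<le> n+1" "sorted_wrt (<) J"
  shows "pistar_alpha n (minor I J) [] = (if I = J then 1 else 0)"
  using minor_one[OF assms] by (simp add: pistar_alpha_def wordmat_Nil)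

lemma deriv_affine: "deriv (\<lambda>z. c + z * d) 0 = (d::complex)"
  by (rule DERIV_imp_deriv) (auto intro!: derivative_eq_intros)

lemma pistar_snoc:
  assumes len: "length J = length I"
    and I: "\<forall>x\<in>set I. 1 \<le> x \<and> x \<le> n+1" "distinct I"
    and J: "\<forall>x\<in>set J. 1 \<le> x \<and> x \<le> n+1"
  shows "pistar_alpha n (minor I J) (w @ [a]) =
    (if 1 \<le> a \<and> a \<le> n \<and> a \<in> set I \<and> Suc a \<notin> set I then pistar_alpha n (minor (upI a I) J) w else 0)"
proof (cases "1 \<le> a \<and> a \<le> n")
  case False
  then show ?thesis by (auto simp: pistar_alpha_def)
next
  case a: True
  show ?thesis
  proof (cases "set w \<subseteq> {1..n}")
    case False
    then show ?thesis by (auto simp: pistar_alpha_def)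
  next
    case w: True
    define m where "m = length w"
    have a1: "1 \<le> a" "a \<le> n" using a by auto
    define F where "F = (\<lambda>s. minor I J (wordmat n w s))"
    define G where "G = (\<lambda>s. minor (upI a I) J (wordmat n w s))"
    define cond where "cond = (a \<in> set I \<and> Suc a \<notin> set I)"
    have eq: "minor I J (wordmat n (w @ [a]) (s(m := z))) = F s + z * (if cond then G s else 0)" for s z
      unfolding F_def G_def cond_def upI_def m_def
      using minor_expE[OF wordmat_carrier[of n w s] a1 len I J]
      by (simp add: wordmat_snoc wordmat_upd)
    have Fp: "F \<in> polyf" unfolding F_def by (rule minor_polyf[OF I(1) J len])
    have LHS: "pistar_alpha n (minor I J) (w @ [a]) = deriv (\<lambda>z. mixed_deriv m (\<lambda>s. F s + z * (if cond then G s else 0))) 0"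
      using a w by (simp add: pistar_alpha_def m_def[symmetric] eq)
    show ?thesis
    proof (cases cond)
      case True
      have I': "\<forall>x\<in>set (upI a I). 1 \<le> x \<and> x \<le> n+1" using I(1) a by (auto simp: upI_def)
      have Gp: "G \<in> polyf" unfolding G_def by (rule minor_polyf[OF I' J]) (simp add: len upI_def)
      have "pistar_alpha n (minor I J) (w @ [a]) = deriv (\<lambda>z. mixed_deriv m F + z * mixed_deriv m G) 0"
        using LHS True mixed_deriv_lin[OF Fp Gp] by simp
      also have "\<dots> = mixed_deriv m G" by (rule deriv_affine)
      finally show ?thesis using True a w unfolding cond_def G_def m_def pistar_alpha_def by simp
    next
      case False
      have "pistar_alpha n (minor I J) (w @ [a]) = deriv (\<lambda>z. mixed_deriv m F + z * 0) 0"
        using LHS False by simp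
      also have "\<dots> = 0" by (rule deriv_affine)
      moreover have "\<not> (1 \<le> a \<and> a \<le> n \<and> a \<in> set I \<and> Suc a \<notin> set I)" using False unfolding cond_def by simp
      ultimately show ?thesis by (simp only: if_not_P if_False)
    qed
  qed
qed

lemma upI_props:
  assumes "sorted_wrt (<) I" "a \<in> set I" "Suc a \<notin> set I"
  shows "sorted_wrt (<) (upI a I)" "length (upI a I) = length I"
    "\<And>r. r < length I \<Longrightarrow> upI a I ! r = (if I ! r = a then Suc a else I ! r)"
proof -
  show "sorted_wrt (<) (upI a I)"
    unfolding upI_def sorted_wrt_map
  proof (rule sorted_wrt_mono_rel[OF _ assms(1)])
    fix x y assume "x \<in> set I" "y \<in> set I" "x < y"
    then show "(if x = a then Suc a else x) < (if y = a then Suc a else y)"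
      using assms(3) by (cases "x = a"; cases "y = a") (auto intro: Suc_lessI)
  qed
qed (auto simp: upI_def)

lemma pistar_bad:
  assumes len: "length J = length I"
    and I: "\<forall>x\<in>set I. 1 \<le> x \<and> x \<le> n+1" "sorted_wrt (<) I"
    and J: "\<forall>x\<in>set J. 1 \<le> x \<and> x \<le> n+1" "sorted_wrt (<) J"
    and bad: "r < length I" "J ! r < I ! r"
  shows "pistar_alpha n (minor I J) w = 0"
  using len I bad
proof (induction w arbitrary: I rule: rev_induct)
  case Nil
  then have "I \<noteq> J" by auto
  then show ?case using pistar_Nil[OF Nil.prems(1-3) J] by simp
next
  case (snoc a w)
  have dI: "distinct I" using snoc.prems(3) by (simp add: strict_sorted_iff)
  show ?case
  proof (cases "1 \<le> a \<and> a \<le> n \<and> a \<in> set I \<and> Suc a \<notin> set I")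
    case True
    note up = upI_props[OF snoc.prems(3)] 
    have "pistar_alpha n (minor (upI a I) J) w = 0"
    proof (rule snoc.IH)
      show "length J = length (upI a I)" using up True snoc.prems by simp
      show "\<forall>x\<in>set (upI a I). 1 \<le> x \<and> x \<le> n+1" using True snoc.prems(2) by (auto simp: upI_def)
      show "sorted_wrt (<) (upI a I)" using up True by simp
      show "r < length (upI a I)" using up True snoc.prems by simp
      show "J ! r < upI a I ! r" using up(3)[OF _ _ snoc.prems(4)] True snoc.prems(5) by auto
    qed
    then show ?thesis using pistar_snoc[OF snoc.prems(1) snoc.prems(2) dI J(1)] True by simp
  next
    case False
    show ?thesis by (simp only: pistar_snoc[OF snoc.prems(1) snoc.prems(2) dI J(1)] if_not_P[OF False])
  qed
qed

definition cmin :: "(nat \<times> nat) set \<Rightarrow> nat \<times> nat \<Rightarrow> bool" where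
  "cmin C c \<longleftrightarrow> c \<in> C \<and> (\<forall>x b. c = (Suc x, b) \<longrightarrow> (x,b) \<notin> C) \<and> (\<forall>x b. c = (x, Suc b) \<longrightarrow> (x,b) \<notin> C)"

definition ordP :: "('a \<Rightarrow> 'a \<Rightarrow> bool) \<Rightarrow> 'a list \<Rightarrow> bool" where
  "ordP R y \<longleftrightarrow> (\<forall>p<length y. \<forall>q<length y. R (y!p) (y!q) \<longrightarrow> p < q)"

lemma ordP_Cons: "ordP R (c#y) \<longleftrightarrow> ordP R y \<and> \<not> R c c \<and> (\<forall>x\<in>set y. \<not> R x c)"
proof
  assume h: "ordP R (c#y)"
  have "ordP R y" unfolding ordP_def
  proof (intro allI impI)
    fix p q assume "p < length y" "q < length y" "R (y!p) (y!q)"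
    then show "p < q" using h[unfolded ordP_def, rule_format, of "Suc p" "Suc q"] by simp
  qed
  moreover have "\<not> R c c" using h[unfolded ordP_def, rule_format, of 0 0] by auto
  moreover have "\<not> R x c" if "x \<in> set y" for x
  proof
    assume "R x c"
    obtain i where "i < length y" "y ! i = x" using \<open>x \<in> set y\<close> by (auto simp: in_set_conv_nth)
    then show False using h[unfolded ordP_def, rule_format, of "Suc i" 0] \<open>R x c\<close> by simp
  qed
  ultimately show "ordP R y \<and> \<not> R c c \<and> (\<forall>x\<in>set y. \<not> R x c)" by blast
next
  assume h: "ordP R y \<and> \<not> R c c \<and> (\<forall>x\<in>set y. \<not> R x c)"
  show "ordP R (c#y)" unfolding ordP_def
  proof (intro allI impI)
    fix p q assume pq: "p < length (c#y)" "q < length (c#y)" "R ((c#y)!p) ((c#y)!q)"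
    show "p < q"
    proof (cases p; cases q)
      fix p' q' assume "p = Suc p'" "q = Suc q'"
      then show "p < q" using pq h unfolding ordP_def by auto
    next
      fix p' assume "p = Suc p'" "q = 0"
      then show "p < q" using pq h by auto
    qed (use pq h in auto)
  qed
qed

definition "R1 u v \<longleftrightarrow> v = (Suc (fst u), snd u)"
definition "R2 u v \<longleftrightarrow> v = (fst u, Suc (snd u))"

lemma A1_iff: "(\<forall>a b p q. p < length y \<and> q < length y \<and> y!p = (a,b) \<and> y!q = (a+1,b) \<longrightarrow> p<q) \<longleftrightarrow> ordP R1 y"
  unfolding ordP_def R1_def
proof (intro iffI allI impI)
  fix p q assume h: "\<forall>a b p q. p < length y \<and> q < length y \<and> y!p = (a,b) \<and> y!q = (a+1,b) \<longrightarrow> p<q"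
    and pq: "p < length y" "q < length y" "y ! q = (Suc (fst (y ! p)), snd (y ! p))"
  show "p < q" using h[rule_format, of p q "fst (y!p)" "snd (y!p)"] pq by simp
next
  fix a b p q assume h: "\<forall>p<length y. \<forall>q<length y. y ! q = (Suc (fst (y ! p)), snd (y ! p)) \<longrightarrow> p < q"
    and pq: "p < length y \<and> q < length y \<and> y!p = (a,b) \<and> y!q = (a+1,b)"
  show "p < q" using h pq by simp
qed

lemma A2_iff: "(\<forall>a b p q. p < length y \<and> q < length y \<and> y!p = (a,b) \<and> y!q = (a,b+1) \<longrightarrow> p<q) \<longleftrightarrow> ordP R2 y"
  unfolding ordP_def R2_def
proof (intro iffI allI impI)
  fix p q assume h: "\<forall>a b p q. p < length y \<and> q < length y \<and> y!p = (a,b) \<and> y!q = (a,b+1) \<longrightarrow> p<q"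
    and pq: "p < length y" "q < length y" "y ! q = (fst (y ! p), Suc (snd (y ! p)))"
  show "p < q" using h[rule_format, of p q "fst (y!p)" "snd (y!p)"] pq by simp
next
  fix a b p q assume h: "\<forall>p<length y. \<forall>q<length y. y ! q = (fst (y ! p), Suc (snd (y ! p))) \<longrightarrow> p < q"
    and pq: "p < length y \<and> q < length y \<and> y!p = (a,b) \<and> y!q = (a,b+1)"
  show "p < q" using h pq by simp
qed

lemma std_alt: "y \<in> std_tableaux C \<longleftrightarrow> distinct y \<and> set y = C \<and> ordP R1 y \<and> ordP R2 y"
  unfolding std_tableaux_def mem_Collect_eq A1_iff A2_iff ..

lemma std_Nil_iff: "[] \<in> std_tableaux C \<longleftrightarrow> C = {}"
  by (auto simp: std_tableaux_def)

lemma std_Cons_iff: "c # y \<in> std_tableaux C \<longleftrightarrow> cmin C c \<and> y \<in> std_tableaux (C - {c})"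
proof -
  have e1: "\<not> R1 c c" "\<not> R2 c c" unfolding R1_def R2_def by (cases c, simp)+
  have e2: "(\<forall>x\<in>set y. \<not> R1 x c) \<longleftrightarrow> (\<forall>x b. c = (Suc x, b) \<longrightarrow> (x,b) \<notin> C)" if sy: "set y = C - {c}"
  proof (intro iffI allI impI notI ballI)
    fix x b assume h: "\<forall>x\<in>set y. \<not> R1 x c" and cx: "c = (Suc x, b)" and m: "(x,b) \<in> C"
    then have "(x,b) \<in> set y" using sy by auto
    then show False using h cx unfolding R1_def by auto
  next
    fix x assume h: "\<forall>x b. c = (Suc x, b) \<longrightarrow> (x,b) \<notin> C" and x: "x \<in> set y" and r: "R1 x c"
    then have "(fst x, snd x) \<notin> C" unfolding R1_def by blast
    then show False using x sy by auto
  qed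
  have e3: "(\<forall>x\<in>set y. \<not> R2 x c) \<longleftrightarrow> (\<forall>x b. c = (x, Suc b) \<longrightarrow> (x,b) \<notin> C)" if sy: "set y = C - {c}"
  proof (intro iffI allI impI notI ballI)
    fix x b assume h: "\<forall>x\<in>set y. \<not> R2 x c" and cx: "c = (x, Suc b)" and m: "(x,b) \<in> C"
    then have "(x,b) \<in> set y" using sy by auto
    then show False using h cx unfolding R2_def by auto
  next
    fix x assume h: "\<forall>x b. c = (x, Suc b) \<longrightarrow> (x,b) \<notin> C" and x: "x \<in> set y" and r: "R2 x c"
    then have "(fst x, snd x) \<notin> C" unfolding R2_def by blast
    then show False using x sy by auto
  qed
  show ?thesis
  proof
    assume h: "c # y \<in> std_tableaux C"
    then have h': "c \<notin> set y" "distinct y" "insert c (set y) = C" "ordP R1 y" "ordP R2 y"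
      "\<forall>x\<in>set y. \<not> R1 x c" "\<forall>x\<in>set y. \<not> R2 x c"
      unfolding std_alt ordP_Cons by simp_all
    then have sy: "set y = C - {c}" "c \<in> C" by auto
    show "cmin C c \<and> y \<in> std_tableaux (C - {c})"
      unfolding cmin_def std_alt using h' sy e2[OF sy(1)] e3[OF sy(1)] by simp
  next
    assume h: "cmin C c \<and> y \<in> std_tableaux (C - {c})"
    then have h': "c \<in> C" "distinct y" "set y = C - {c}" "ordP R1 y" "ordP R2 y"
      "\<forall>x b. c = (Suc x, b) \<longrightarrow> (x,b) \<notin> C" "\<forall>x b. c = (x, Suc b) \<longrightarrow> (x,b) \<notin> C"
      unfolding cmin_def std_alt by simp_all
    have "c \<notin> set y" "insert c (set y) = C" using h' by auto
    then show "c # y \<in> std_tableaux C"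
      unfolding std_alt ordP_Cons using h' e1 e2[OF h'(3)] e3[OF h'(3)] by simp
  qed
qed

lemma tw_Cons: "tableau_word (c # y) = tableau_word y @ [fst c - snd c]"
  by (cases c) (simp add: tableau_word_def)

lemma tw_Nil: "tableau_word [] = []"
  by (simp add: tableau_word_def)

lemma N_snoc:
  assumes "{c. cmin C c \<and> fst c - snd c = a} = {c0}"
  shows "{y \<in> std_tableaux C. tableau_word y = w @ [a]} = Cons c0 ` {y \<in> std_tableaux (C - {c0}). tableau_word y = w}"
proof (intro equalityI subsetI)
  fix y assume y: "y \<in> {y \<in> std_tableaux C. tableau_word y = w @ [a]}"
  then have y1: "y \<in> std_tableaux C" and y2: "tableau_word y = w @ [a]" by simp_all
  have "y \<noteq> []" using y2 by (auto simp: tableau_word_def)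
  then obtain c y' where yc: "y = c # y'" by (meson list.exhaust)
  have tw: "tableau_word y' @ [fst c - snd c] = w @ [a]" using y2 yc by (simp add: tw_Cons)
  have t1: "tableau_word y' = w" "fst c - snd c = a" using tw by simp_all
  have t2: "cmin C c" "y' \<in> std_tableaux (C - {c})" using y1 yc by (simp_all add: std_Cons_iff)
  have "c \<in> {c. cmin C c \<and> fst c - snd c = a}" using t1 t2 by simp
  then have "c = c0" using assms by simp
  then show "y \<in> Cons c0 ` {y \<in> std_tableaux (C - {c0}). tableau_word y = w}" using yc t1 t2 by blast
next
  have "c0 \<in> {c. cmin C c \<and> fst c - snd c = a}" using assms by simp
  then have c0: "cmin C c0" "fst c0 - snd c0 = a" by simp_all
  fix y assume "y \<in> Cons c0 ` {y \<in> std_tableaux (C - {c0}). tableau_word y = w}"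
  then obtain y' where "y = c0 # y'" "y' \<in> std_tableaux (C - {c0})" "tableau_word y' = w" by blast
  then show "y \<in> {y \<in> std_tableaux C. tableau_word y = w @ [a]}"
    using c0 by (simp add: std_Cons_iff tw_Cons)
qed

lemma N_snoc0:
  assumes "\<And>c. cmin C c \<Longrightarrow> fst c - snd c \<noteq> a"
  shows "{y \<in> std_tableaux C. tableau_word y = w @ [a]} = {}"
proof (rule ccontr)
  assume "{y \<in> std_tableaux C. tableau_word y = w @ [a]} \<noteq> {}"
  then obtain y where y1: "y \<in> std_tableaux C" and y2: "tableau_word y = w @ [a]" by blast
  have "y \<noteq> []" using y2 by (auto simp: tableau_word_def)
  then obtain c y' where yc: "y = c # y'" by (meson list.exhaust)
  have "cmin C c" using y1 yc by (simp add: std_Cons_iff)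
  moreover have "fst c - snd c = a" using y2 yc by (simp add: tw_Cons)
  ultimately show False using assms by blast
qed

lemma sorted_nth_less_iff:
  assumes "sorted_wrt (<) (xs :: nat list)" "i < length xs" "j < length xs"
  shows "xs ! i < xs ! j \<longleftrightarrow> i < j"
proof
  assume "xs ! i < xs ! j"
  show "i < j"
  proof (rule ccontr)
    assume "\<not> i < j"
    then have "j = i \<or> j < i" by auto
    then show False using sorted_wrt_nth_less[OF assms(1), of j i] assms \<open>xs ! i < xs ! j\<close> by auto
  qed
qed (use sorted_wrt_nth_less[OF assms(1)] assms in auto)

lemma mem_skew:
  assumes "length J = length I"
  shows "(x,b) \<in> skew_cells I J \<longleftrightarrow> 1 \<le> b \<and> b \<le> length I \<and>
    I!(length I - b) + b - 1 < x \<and> x \<le> J!(length I - b) + b - 1"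
  using assms by (simp add: skew_cells_def)

lemma cmin_skew:
  assumes len: "length J = length I" and I: "sorted_wrt (<) I" "\<forall>x\<in>set I. 1 \<le> x"
    and J: "sorted_wrt (<) J"
    and c: "cmin (skew_cells I J) c" "fst c - snd c = a"
  shows "\<exists>r<length I. I!r = a \<and> a < J!r \<and> Suc a \<notin> set I \<and> c = (a + (length I - r), length I - r)"
proof -
  define k where "k = length I"
  obtain x b where xb: "c = (x,b)" by (cases c)
  have mem: "(x,b) \<in> skew_cells I J" using c xb by (simp add: cmin_def)
  define r where "r = k - b"
  have b: "1 \<le> b" "b \<le> k" using mem len by (auto simp: mem_skew k_def)
  then have r: "r < k" "b = k - r" unfolding r_def by auto
  have I1: "1 \<le> I!r" using I(2) r(1) by (auto simp: k_def)
  have x1: "I!r + b - 1 < x" "x \<le> J!r + b - 1" using mem len by (auto simp: mem_skew k_def r_def)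
  have "(x - 1, b) \<notin> skew_cells I J"
    using c xb x1 I1 b unfolding cmin_def by (metis Suc_pred' gr0I less_nat_zero_code)
  then have "\<not> (I!r + b - 1 < x - 1)" using x1 b len by (auto simp: mem_skew k_def r_def)
  then have xe: "x = I!r + b" using x1 I1 by auto
  then have ar: "a = I!r" using c xb by simp
  have aJ: "a < J!r" using x1 xe ar b by auto
  have "Suc a \<notin> set I"
  proof
    assume "Suc a \<in> set I"
    then obtain r' where r': "r' < k" "I!r' = Suc a" by (auto simp: in_set_conv_nth k_def)
    have "r < r'" using sorted_nth_less_iff[OF I(1), of r r'] r r' ar unfolding k_def by simp
    have rr: "r' = Suc r"
    proof (rule ccontr)
      assume "r' \<noteq> Suc r"
      then have "Suc r < r'" using \<open>r < r'\<close> by auto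
      then have "I!(Suc r) < I!r'" "I!r < I!(Suc r)"
        using sorted_nth_less_iff[OF I(1), of "Suc r" r'] sorted_nth_less_iff[OF I(1), of r "Suc r"] r' r unfolding k_def by auto
      then show False using r' ar by auto
    qed
    have b2: "2 \<le> b" using r r' rr by auto
    have J2: "J!r < J!(Suc r)" using sorted_nth_less_iff[OF J, of r "Suc r"] r' rr len unfolding k_def by auto
    have "(x, b - 1) \<in> skew_cells I J"
      unfolding mem_skew[OF len] using b2 b r r' rr xe ar aJ J2
      by (auto simp: k_def[symmetric] Suc_diff_Suc)
    moreover have "c = (x, Suc (b - 1))" using xb b2 by auto
    ultimately show False using c(1) unfolding cmin_def by blast
  qed
  then show ?thesis using r xe ar aJ xb unfolding k_def by auto
qed

lemma cmin_skew_exists: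
  assumes len: "length J = length I" and I: "sorted_wrt (<) I" "\<forall>x\<in>set I. 1 \<le> x"
    and r0: "r0 < length I" "I!r0 = a" "a < J!r0" "Suc a \<notin> set I"
  shows "cmin (skew_cells I J) (a + (length I - r0), length I - r0)"
    "skew_cells I J - {(a + (length I - r0), length I - r0)} = skew_cells (upI a I) J"
proof -
  define k where "k = length I"
  define b where "b = k - r0"
  have b: "1 \<le> b" "b \<le> k" "k - b = r0" using r0 unfolding b_def k_def by auto
  have ms: "(x,b') \<in> skew_cells I J \<longleftrightarrow> 1 \<le> b' \<and> b' \<le> k \<and> I!(k - b') + b' - 1 < x \<and> x \<le> J!(k - b') + b' - 1" for x b'
    unfolding k_def by (rule mem_skew[OF len])
  have a1: "1 \<le> a" using I(2) r0 nth_mem by metis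
  have mem: "(a + b, b) \<in> skew_cells I J"
    unfolding ms b(3) using b r0 a1 by simp
  have n1: "(x, b) \<notin> skew_cells I J" if "a + b = Suc x" for x
    unfolding ms b(3) using that b r0 by simp
  have n2: "(a + b, b') \<notin> skew_cells I J" if bb: "b = Suc b'" for b'
  proof
    assume m: "(a + b, b') \<in> skew_cells I J"
    then have b1: "1 \<le> b'" unfolding ms by simp
    have kb: "k - b' = Suc r0" "Suc r0 < k" using b bb b1 by auto
    have "I!(Suc r0) + b' - 1 < a + b" using m unfolding ms kb(1) by simp
    then have "I!(Suc r0) \<le> Suc a" using bb b1 by simp
    moreover have "a < I!(Suc r0)" using sorted_nth_less_iff[OF I(1), of r0 "Suc r0"] r0 kb(2) unfolding k_def by simp
    ultimately have "I!(Suc r0) = Suc a" by simp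
    then show False using r0(4) kb(2) nth_mem unfolding k_def by metis
  qed
  show "cmin (skew_cells I J) (a + (length I - r0), length I - r0)"
    unfolding cmin_def k_def[symmetric] b_def[symmetric]
  proof (intro conjI allI impI)
    show "(a + b, b) \<in> skew_cells I J" by (rule mem)
  next
    fix x b'' assume "(a + b, b) = (Suc x, b'')"
    then show "(x, b'') \<notin> skew_cells I J" using n1 by simp
  next
    fix x b'' assume "(a + b, b) = (x, Suc b'')"
    then have "x = a + b" "b = Suc b''" by simp_all
    then show "(x, b'') \<notin> skew_cells I J" using n2[of b''] by simp
  qed
  have dI: "distinct I" using I(1) by (simp add: strict_sorted_iff)
  have upn: "upI a I ! r = (if r = r0 then Suc a else I ! r)" if "r < k" for r
  proof (cases "r = r0")
    case True then show ?thesis using that r0 unfolding upI_def k_def by simp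
  next
    case False
    then have "I ! r \<noteq> a" using that r0 dI unfolding k_def by (metis nth_eq_iff_index_eq)
    then show ?thesis using that False unfolding upI_def k_def by simp
  qed
  have len2: "length J = length (upI a I)" using len by (simp add: upI_def)
  have ms2: "(x,b') \<in> skew_cells (upI a I) J \<longleftrightarrow> 1 \<le> b' \<and> b' \<le> k \<and> upI a I!(k - b') + b' - 1 < x \<and> x \<le> J!(k - b') + b' - 1" for x b'
    using mem_skew[OF len2, of x b'] unfolding k_def by (simp add: upI_def)
  have key: "(x,b') \<in> skew_cells I J - {(a + b, b)} \<longleftrightarrow> (x,b') \<in> skew_cells (upI a I) J" for x b'
  proof (cases "1 \<le> b' \<and> b' \<le> k")
    case False
    then show ?thesis unfolding Diff_iff ms ms2 by auto
  next
    case True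
    then have kb: "k - b' < k" by simp
    show ?thesis
    proof (cases "k - b' = r0")
      case True
      then have "b' = b" using b \<open>1 \<le> b' \<and> b' \<le> k\<close> by linarith
      then show ?thesis unfolding Diff_iff singleton_iff ms ms2 upn[OF kb] using True r0 a1 by (auto; arith)
    next
      case False
      then have "b' \<noteq> b" using b by auto
      then show ?thesis unfolding Diff_iff singleton_iff ms ms2 upn[OF kb] using False by simp
    qed
  qed
  show "skew_cells I J - {(a + (length I - r0), length I - r0)} = skew_cells (upI a I) J"
    unfolding k_def[symmetric] b_def[symmetric]
  proof (intro equalityI subsetI)
    fix c assume "c \<in> skew_cells I J - {(a + b, b)}"
    then show "c \<in> skew_cells (upI a I) J" using key[of "fst c" "snd c"] by simp
  next
    fix c assume "c \<in> skew_cells (upI a I) J"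
    then show "c \<in> skew_cells I J - {(a + b, b)}" using key[of "fst c" "snd c"] by simp
  qed
qed

lemma finite_skew: "finite (skew_cells I J)"
proof (rule finite_subset)
  show "skew_cells I J \<subseteq> {0..Max (set J) + J ! 0 + length I} \<times> {0..length I}"
  proof
    fix c assume "c \<in> skew_cells I J"
    then obtain x b where c: "c = (x,b)" "1 \<le> b" "b \<le> length I" "x \<le> J!(length J - b) + b - 1"
      unfolding skew_cells_def by auto
    show "c \<in> {0..Max (set J) + J ! 0 + length I} \<times> {0..length I}"
    proof (cases "length J - b < length J")
      case True
      then have "J!(length J - b) \<le> Max (set J)" by (simp add: nth_mem)
      then show ?thesis using c by auto
    next
      case False
      then show ?thesis using c by auto
    qed
  qed
qed auto

lemma finite_std: "finite C \<Longrightarrow> finite (std_tableaux C)"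
  by (rule finite_subset[OF _ finite_subset_distinct[of C]]) (auto simp: std_tableaux_def)

definition Tc :: "nat list \<Rightarrow> nat list \<Rightarrow> nat list \<Rightarrow> nat" where
  "Tc I J w = card {y \<in> std_tableaux (skew_cells I J). tableau_word y = w}"

lemma skew_empty_iff:
  assumes len: "length J = length I" and I: "\<forall>x\<in>set I. 1 \<le> x" and le: "\<forall>r<length I. I!r \<le> J!r"
  shows "skew_cells I J = {} \<longleftrightarrow> I = J"
proof
  assume e: "skew_cells I J = {}"
  show "I = J"
  proof (rule ccontr)
    assume "I \<noteq> J"
    then obtain r where r: "r < length I" "I!r \<noteq> J!r" using len nth_equalityI by metis
    then have lt: "I!r < J!r" using le by fastforce
    have i1: "1 \<le> I!r" using I r(1) nth_mem by metis
    define b where "b = length I - r"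
    have b: "1 \<le> b" "b \<le> length I" "length I - b = r" using r(1) unfolding b_def by auto
    have "(J!r + b - 1, b) \<in> skew_cells I J"
      unfolding mem_skew[OF len] b(3) using b lt i1 by simp
    then show False using e by simp
  qed
next
  assume "I = J"
  then show "skew_cells I J = {}" unfolding skew_cells_def by auto
qed

lemma T_Nil:
  assumes len: "length J = length I" and I: "\<forall>x\<in>set I. 1 \<le> x" and le: "\<forall>r<length I. I!r \<le> J!r"
  shows "Tc I J [] = (if I = J then 1 else 0)"
proof -
  have "{y \<in> std_tableaux (skew_cells I J). tableau_word y = []} = {y \<in> std_tableaux (skew_cells I J). y = []}"
    by (simp add: tableau_word_def)
  also have "\<dots> = (if I = J then {[]} else {})"
    using std_Nil_iff[of "skew_cells I J"] skew_empty_iff[OF len I le] by auto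
  finally show ?thesis unfolding Tc_def by simp
qed

lemma T_snoc:
  assumes len: "length J = length I" and I: "sorted_wrt (<) I" "\<forall>x\<in>set I. 1 \<le> x"
    and J: "sorted_wrt (<) J"
  shows "Tc I J (w @ [a]) = (if \<exists>r<length I. I!r = a \<and> a < J!r \<and> Suc a \<notin> set I then Tc (upI a I) J w else 0)"
proof (cases "\<exists>r<length I. I!r = a \<and> a < J!r \<and> Suc a \<notin> set I")
  case True
  then obtain r0 where r0: "r0 < length I" "I!r0 = a" "a < J!r0" "Suc a \<notin> set I" by blast
  define c0 where "c0 = (a + (length I - r0), length I - r0)"
  note ex = cmin_skew_exists[OF len I r0]
  have dI: "distinct I" using I(1) by (simp add: strict_sorted_iff)
  have cs: "{c. cmin (skew_cells I J) c \<and> fst c - snd c = a} = {c0}"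
  proof (intro equalityI subsetI)
    fix c assume "c \<in> {c. cmin (skew_cells I J) c \<and> fst c - snd c = a}"
    then have "cmin (skew_cells I J) c" "fst c - snd c = a" by simp_all
    from cmin_skew[OF len I J this] obtain r where r: "r < length I" "I!r = a" "c = (a + (length I - r), length I - r)"
      by blast
    have "r = r0" using r r0 dI by (metis nth_eq_iff_index_eq)
    then show "c \<in> {c0}" using r unfolding c0_def by simp
  next
    fix c assume "c \<in> {c0}"
    then show "c \<in> {c. cmin (skew_cells I J) c \<and> fst c - snd c = a}"
      using ex(1) unfolding c0_def by simp
  qed
  have "Tc I J (w @ [a]) = card (Cons c0 ` {y \<in> std_tableaux (skew_cells I J - {c0}). tableau_word y = w})"
    unfolding Tc_def N_snoc[OF cs] ..
  also have "\<dots> = Tc (upI a I) J w"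
    unfolding Tc_def c0_def ex(2) by (rule card_image) (simp add: inj_on_def)
  finally show ?thesis using True by simp
next
  case False
  have "{y \<in> std_tableaux (skew_cells I J). tableau_word y = w @ [a]} = {}"
  proof (rule N_snoc0)
    fix c assume "cmin (skew_cells I J) c"
    then show "fst c - snd c \<noteq> a" using cmin_skew[OF len I J] False by blast
  qed
  then have "Tc I J (w @ [a]) = 0" unfolding Tc_def by (simp only: card.empty)
  then show ?thesis by (simp only: if_not_P[OF False])
qed

lemma main_gen:
  assumes J: "sorted_wrt (<) J" "\<forall>x\<in>set J. 1 \<le> x \<and> x \<le> n + 1"
  shows "length J = length I \<Longrightarrow> sorted_wrt (<) I \<Longrightarrow> \<forall>x\<in>set I. 1 \<le> x \<and> x \<le> n + 1
    \<Longrightarrow> \<forall>r<length I. I ! r \<le> J ! r \<Longrightarrow> pistar_alpha n (minor I J) w = of_nat (Tc I J w)"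
proof (induction w arbitrary: I rule: rev_induct)
  case Nil
  have I1: "\<forall>x\<in>set I. 1 \<le> x" using Nil.prems(3) by auto
  show ?case using pistar_Nil[OF Nil.prems(1) Nil.prems(3) Nil.prems(2) J(2) J(1)] T_Nil[OF Nil.prems(1) I1 Nil.prems(4)]
    by simp
next
  case (snoc a w)
  note len = snoc.prems(1) and sI = snoc.prems(2) and rI = snoc.prems(3) and le = snoc.prems(4)
  have I1: "\<forall>x\<in>set I. 1 \<le> x" using rI by auto
  have dI: "distinct I" using sI by (simp add: strict_sorted_iff)
  note P = pistar_snoc[OF len rI dI J(2), of w a]
  note T = T_snoc[OF len sI I1 J(1), of w a]
  show ?case
  proof (cases "\<exists>r<length I. I!r = a \<and> a < J!r \<and> Suc a \<notin> set I")
    case True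
    then obtain r0 where r0: "r0 < length I" "I!r0 = a" "a < J!r0" "Suc a \<notin> set I" by blast
    have aI: "a \<in> set I" using r0 nth_mem by metis
    have "J!r0 \<in> set J" using r0(1) len by simp
    then have "J!r0 \<le> n+1" using J(2) by blast
    then have a1: "1 \<le> a" "a \<le> n" using rI aI r0(3) by auto
    note up = upI_props[OF sI aI r0(4)]
    have "pistar_alpha n (minor (upI a I) J) w = of_nat (Tc (upI a I) J w)"
    proof (rule snoc.IH)
      show "length J = length (upI a I)" using up len by simp
      show "sorted_wrt (<) (upI a I)" using up by simp
      show "\<forall>x\<in>set (upI a I). 1 \<le> x \<and> x \<le> n + 1" using rI a1 by (auto simp: upI_def)
      show "\<forall>r<length (upI a I). upI a I ! r \<le> J ! r"
      proof (intro allI impI)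
        fix r assume "r < length (upI a I)"
        then have r: "r < length I" using up by simp
        show "upI a I ! r \<le> J ! r"
        proof (cases "I!r = a")
          case True
          then have "r = r0" using r r0 dI by (metis nth_eq_iff_index_eq)
          then show ?thesis using up(3)[OF r] True r0 by simp
        next
          case False
          then show ?thesis using up(3)[OF r] le r by simp
        qed
      qed
    qed
    then show ?thesis using P T True a1 aI r0(4) by simp
  next
    case False
    have T0: "Tc I J (w @ [a]) = 0" using T by (simp only: if_not_P[OF False])
    show ?thesis
    proof (cases "1 \<le> a \<and> a \<le> n \<and> a \<in> set I \<and> Suc a \<notin> set I")
      case True
      then obtain r where r: "r < length I" "I!r = a" by (auto simp: in_set_conv_nth)
      have "\<not> a < J!r" using False r True by blast
      moreover have "a \<le> J!r" using le r by auto
      ultimately have "J!r = a" by simp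
      note up = upI_props[OF sI _ _]
      have "pistar_alpha n (minor (upI a I) J) w = 0"
      proof (rule pistar_bad[OF _ _ _ J(2) J(1)])
        show "length J = length (upI a I)" using up True len by simp
        show "\<forall>x\<in>set (upI a I). 1 \<le> x \<and> x \<le> n + 1" using rI True by (auto simp: upI_def)
        show "sorted_wrt (<) (upI a I)" using up True by simp
        show "r < length (upI a I)" using up True r by simp
        show "J ! r < upI a I ! r" using up(3)[of a r] True r \<open>J!r = a\<close> by simp
      qed
      then show ?thesis using P T0 True by simp
    next
      case c: False
      show ?thesis using P T0 by (simp only: if_not_P[OF c] of_nat_0)
    qed
  qed
qed

lemma sum_fun_apply: "(\<Sum>y\<in>A. f y) x = (\<Sum>y\<in>A. f y x)"
proof (cases "finite A")
  case True
  then show ?thesis by (induction A rule: finite_induct) simp_all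
next
  case False
  then show ?thesis by simp
qed

theorem mainTheorem11:
  fixes n :: nat and I J :: "nat list"
  assumes "n \<ge> 1"
    and "length I = length J" and "length I \<ge> 1"
    and "sorted_wrt (<) I" and "sorted_wrt (<) J"
    and "\<forall>x\<in>set I. 1 \<le> x \<and> x \<le> n + 1"
    and "\<forall>x\<in>set J. 1 \<le> x \<and> x \<le> n + 1"
    and "\<forall>r<length I. I ! r \<le> J ! r"
  shows "pistar_alpha n (minor I J) =
           (\<Sum>y\<in>std_tableaux (skew_cells I J). wdual (tableau_word y))"
proof
  fix ws
  have fin: "finite (std_tableaux (skew_cells I J))" by (rule finite_std[OF finite_skew])
  have "(\<Sum>y\<in>std_tableaux (skew_cells I J). wdual (tableau_word y)) ws
      = (\<Sum>y\<in>std_tableaux (skew_cells I J). (if tableau_word y = ws then 1 else 0))"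
    unfolding sum_fun_apply wdual_def by (intro sum.cong) auto
  also have "\<dots> = (\<Sum>y\<in>{y \<in> std_tableaux (skew_cells I J). tableau_word y = ws}. 1)"
    by (rule sum.inter_filter[symmetric, OF fin])
  also have "\<dots> = of_nat (Tc I J ws)" unfolding Tc_def by simp
  also have "\<dots> = pistar_alpha n (minor I J) ws"
    using main_gen[OF assms(5) assms(7), of I ws] assms by simp
  finally show "pistar_alpha n (minor I J) ws = (\<Sum>y\<in>std_tableaux (skew_cells I J). wdual (tableau_word y)) ws" ..
qed

end
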